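(* Let $f:2^V\to\mathbb{Z}_{\ge0}$ be a connectivity function, $W\subseteq V$, and $(C_1,C_2,C_3)$ a minimum $W$-improvement of arity 3. Then for every $i\in\{1,2,3\}$, $W$ directly orients $C_i$.
   Context: A connectivity function $f:2^V\to\mathbb{Z}_{\ge0}$ ($V$ finite) satisfies $f(\emptyset)=0$, $f(X)=f(V\setminus X)$, and $f(X\cup Y)+f(X\cap Y)\le f(X)+f(Y)$. Write $\overline{X}=V\setminus X$. $W$ directly orients $C$ if $f(C\cap W)<f(\overline{C}\cap W)$ and $f(C\cap\overline{W})<f(\overline{C}\cap\overline{W})$. For $W\subseteq V$, a $W$-improvement is a tripartition $(C_1,C_2,C_3)$ of $V$ (pairwise disjoint, possibly empty, union $V$) with $f(C_i)<f(W)/2$, $f(C_i\cap W)<f(W)$, $f(C_i\cap\overline{W})<f(W)$ for each $i$. Its width is $\max_i f(C_i)$, its sum-width is $\sum_i f(C_i)$, and its arity is the number of nonempty $C_i$. A $W$-improvement is minimum if it has minimum width among all $W$-improvements, subject to that minimum arity, and subject to those minimum sum-width. *)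

theory Defs
  imports Main
begin

text \<open>Connectivity function on a finite ground set V, with values in the naturals.
  Only the values on subsets of V matter.\<close>

definition connectivity_function :: "'a set \<Rightarrow> ('a set \<Rightarrow> nat) \<Rightarrow> bool" where
  "connectivity_function V f \<longleftrightarrow>
     finite V \<and> f {} = 0 \<and>
     (\<forall>X. X \<subseteq> V \<longrightarrow> f X = f (V - X)) \<and>
     (\<forall>X Y. X \<subseteq> V \<longrightarrow> Y \<subseteq> V \<longrightarrow> f (X \<union> Y) + f (X \<inter> Y) \<le> f X + f Y)"

definition directly_orients :: "'a set \<Rightarrow> ('a set \<Rightarrow> nat) \<Rightarrow> 'a set \<Rightarrow> 'a set \<Rightarrow> bool" where
  "directly_orients V f W C \<longleftrightarrow>
     f (C \<inter> W) < f ((V - C) \<inter> W) \<and> f (C \<inter> (V - W)) < f ((V - C) \<inter> (V - W))"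

definition tripartition :: "'a set \<Rightarrow> 'a set \<times> 'a set \<times> 'a set \<Rightarrow> bool" where
  "tripartition V P \<longleftrightarrow> (case P of (C1, C2, C3) \<Rightarrow>
     C1 \<inter> C2 = {} \<and> C1 \<inter> C3 = {} \<and> C2 \<inter> C3 = {} \<and> C1 \<union> C2 \<union> C3 = V)"

definition parts :: "'a set \<times> 'a set \<times> 'a set \<Rightarrow> 'a set list" where
  "parts P = (case P of (C1, C2, C3) \<Rightarrow> [C1, C2, C3])"

text \<open>f(C) < f(W)/2 is written as 2 * f(C) < f(W) (equivalent over the integers).\<close>
definition improvement :: "'a set \<Rightarrow> ('a set \<Rightarrow> nat) \<Rightarrow> 'a set \<Rightarrow> 'a set \<times> 'a set \<times> 'a set \<Rightarrow> bool" where
  "improvement V f W P \<longleftrightarrow> tripartition V P \<and>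
     (\<forall>C \<in> set (parts P). 2 * f C < f W \<and> f (C \<inter> W) < f W \<and> f (C \<inter> (V - W)) < f W)"

definition width :: "('a set \<Rightarrow> nat) \<Rightarrow> 'a set \<times> 'a set \<times> 'a set \<Rightarrow> nat" where
  "width f P = (case P of (C1, C2, C3) \<Rightarrow> max (f C1) (max (f C2) (f C3)))"

definition sum_width :: "('a set \<Rightarrow> nat) \<Rightarrow> 'a set \<times> 'a set \<times> 'a set \<Rightarrow> nat" where
  "sum_width f P = (case P of (C1, C2, C3) \<Rightarrow> f C1 + f C2 + f C3)"

definition arity :: "'a set \<times> 'a set \<times> 'a set \<Rightarrow> nat" where
  "arity P = length (filter (\<lambda>C. C \<noteq> {}) (parts P))"

definition min_improvement :: "'a set \<Rightarrow> ('a set \<Rightarrow> nat) \<Rightarrow> 'a set \<Rightarrow> 'a set \<times> 'a set \<times> 'a set \<Rightarrow> bool" where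
  "min_improvement V f W P \<longleftrightarrow> improvement V f W P \<and>
     (\<forall>Q. improvement V f W Q \<longrightarrow>
        width f P < width f Q \<or>
        (width f P = width f Q \<and> arity P < arity Q) \<or>
        (width f P = width f Q \<and> arity P = arity Q \<and> sum_width f P \<le> sum_width f Q))"

end

theory Submission
  imports Defs
begin

lemma key:
  assumes cf: "connectivity_function V f" and WV: "W \<subseteq> V" and AV: "A \<subseteq> V"
    and h1: "2 * f A < f W" and h2: "f (A \<inter> W) < f W" and h3: "f (A \<inter> (V - W)) < f W"
    and h: "f W \<le> f ((V - A) \<inter> W) \<or> f W \<le> f ((V - A) \<inter> (V - W))"
  shows "directly_orients V f W A"
proof -
  have sym: "\<And>X. X \<subseteq> V \<Longrightarrow> f X = f (V - X)" using cf unfolding connectivity_function_def by blast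
  have sub: "\<And>X Y. X \<subseteq> V \<Longrightarrow> Y \<subseteq> V \<Longrightarrow> f (X \<union> Y) + f (X \<inter> Y) \<le> f X + f Y"
    using cf unfolding connectivity_function_def by blast
  have f0: "f {} = 0" using cf unfolding connectivity_function_def by blast
  have fWc: "f (V - W) = f W" using sym[OF WV] by simp
  show ?thesis
  proof (cases "f W \<le> f ((V - A) \<inter> W)")
    case True
    have e1: "f (A \<union> (V - W)) = f ((V - A) \<inter> W)"
    proof -
      have "f (A \<union> (V - W)) = f (V - (A \<union> (V - W)))" using AV by (intro sym) blast
      moreover have "V - (A \<union> (V - W)) = (V - A) \<inter> W" using WV by blast
      ultimately show ?thesis by simp
    qed
    have "f (A \<union> (V - W)) + f (A \<inter> (V - W)) \<le> f A + f (V - W)" using AV by (intro sub) auto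
    hence a1: "f (A \<inter> (V - W)) \<le> f A" using e1 True fWc by linarith
    have "f ((A \<inter> (V - W)) \<union> ((V - A) \<inter> (V - W))) + f ((A \<inter> (V - W)) \<inter> ((V - A) \<inter> (V - W)))
        \<le> f (A \<inter> (V - W)) + f ((V - A) \<inter> (V - W))" by (intro sub) auto
    moreover have "(A \<inter> (V - W)) \<union> ((V - A) \<inter> (V - W)) = V - W" by blast
    moreover have "(A \<inter> (V - W)) \<inter> ((V - A) \<inter> (V - W)) = {}" by blast
    ultimately have "f W \<le> f (A \<inter> (V - W)) + f ((V - A) \<inter> (V - W))" using f0 fWc by simp
    then show ?thesis unfolding directly_orients_def using True h2 h1 a1 by linarith
  next
    case False
    hence F: "f W \<le> f ((V - A) \<inter> (V - W))" using h by simp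
    have e1: "f (A \<union> W) = f ((V - A) \<inter> (V - W))"
    proof -
      have "f (A \<union> W) = f (V - (A \<union> W))" using AV WV by (intro sym) blast
      moreover have "V - (A \<union> W) = (V - A) \<inter> (V - W)" by blast
      ultimately show ?thesis by simp
    qed
    have "f (A \<union> W) + f (A \<inter> W) \<le> f A + f W" using AV WV by (intro sub) auto
    hence a1: "f (A \<inter> W) \<le> f A" using e1 F by linarith
    have "f ((A \<inter> W) \<union> ((V - A) \<inter> W)) + f ((A \<inter> W) \<inter> ((V - A) \<inter> W))
        \<le> f (A \<inter> W) + f ((V - A) \<inter> W)" using WV by (intro sub) auto
    moreover have "(A \<inter> W) \<union> ((V - A) \<inter> W) = W" using WV by blast
    moreover have "(A \<inter> W) \<inter> ((V - A) \<inter> W) = {}" by blast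
    ultimately have "f W \<le> f (A \<inter> W) + f ((V - A) \<inter> W)" using f0 by simp
    then show ?thesis unfolding directly_orients_def using F h3 h1 a1 by linarith
  qed
qed

lemma merge:
  assumes cf: "connectivity_function V f" and WV: "W \<subseteq> V"
    and mi: "min_improvement V f W P"
    and ar: "arity P = 3"
    and A: "A \<in> set (parts P)"
    and P: "P = (C1, C2, C3)"
  shows "directly_orients V f W A"
proof -
  have imp: "improvement V f W P" using mi unfolding min_improvement_def by blast
  have tp: "C1 \<inter> C2 = {} \<and> C1 \<inter> C3 = {} \<and> C2 \<inter> C3 = {} \<and> C1 \<union> C2 \<union> C3 = V"
    using imp unfolding improvement_def tripartition_def P by simp
  have ne0: "C1 \<noteq> {} \<and> C2 \<noteq> {} \<and> C3 \<noteq> {}"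
    using ar unfolding arity_def parts_def P
    by (cases "C1 = {}"; cases "C2 = {}"; cases "C3 = {}"; simp)
  hence ne: "C1 \<noteq> {}" "C2 \<noteq> {}" "C3 \<noteq> {}" by auto
  have AV: "A \<subseteq> V" using A tp unfolding parts_def P by auto
  have Ane: "A \<noteq> {}" and Acne: "V - A \<noteq> {}" using A tp ne unfolding parts_def P by auto
  have conds: "2 * f A < f W \<and> f (A \<inter> W) < f W \<and> f (A \<inter> (V - W)) < f W"
    using imp A unfolding improvement_def by blast
  have sym: "f (V - A) = f A" using cf AV unfolding connectivity_function_def by (metis)
  have f0: "f {} = 0" using cf unfolding connectivity_function_def by blast
  have wle: "f A \<le> width f P" using A unfolding width_def parts_def P by auto
  define Q where "Q = (A, V - A, {} :: 'a set)"
  have wQ: "width f Q = f A" unfolding Q_def width_def using sym f0 by simp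
  have aQ: "arity Q = 2" unfolding Q_def arity_def parts_def using Ane Acne by simp
  have "\<not> improvement V f W Q"
  proof
    assume iq: "improvement V f W Q"
    have "width f P < width f Q \<or> (width f P = width f Q \<and> arity P < arity Q) \<or>
        (width f P = width f Q \<and> arity P = arity Q \<and> sum_width f P \<le> sum_width f Q)"
      using mi iq unfolding min_improvement_def by blast
    then show False using wQ aQ wle ar by linarith
  qed
  moreover have "tripartition V Q" unfolding tripartition_def Q_def using AV by auto
  ultimately have "\<not> (f ((V - A) \<inter> W) < f W \<and> f ((V - A) \<inter> (V - W)) < f W)"
    unfolding improvement_def Q_def parts_def using conds sym f0 by (simp add: Q_def)
  hence "f W \<le> f ((V - A) \<inter> W) \<or> f W \<le> f ((V - A) \<inter> (V - W))" by linarith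
  then show ?thesis using key[OF cf WV AV] conds by blast
qed

theorem lemma7:
  fixes V W :: "'a set" and f :: "'a set \<Rightarrow> nat" and C1 C2 C3 :: "'a set"
  assumes "connectivity_function V f"
    and "W \<subseteq> V"
    and "min_improvement V f W (C1, C2, C3)"
    and "arity (C1, C2, C3) = 3"
  shows "directly_orients V f W C1 \<and> directly_orients V f W C2 \<and> directly_orients V f W C3"
  using merge[OF assms(1,2,3,4) _ refl] unfolding parts_def by simp

end
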